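(* Let $m,p$ be positive integers and let $\gamma=(\gamma_{ik})\in\{0,1\}^{m\times p}$ satisfy $\sum_{k=1}^p\gamma_{ik}=1$ for every $i=1,\dots,m$. For each $i$ let $\pi(i)$ be the unique $k$ with $\gamma_{ik}=1$. Then $\gamma$ satisfies \[\sum_{j=1}^{i-1}\gamma_{jk}\;\ge\;\sum_{l=k+1}^{p}\gamma_{il}\qquad\text{for all } i\in\{1,\dots,m\},\ k\in\{1,\dots,p\}\text{ with } k\le i\] (an empty sum being $0$) if and only if $\pi(1)=1$ and $\pi(i)\le 1+\max_{j<i}\pi(j)$ for every $i=2,\dots,m$. Consequently, for every partition of $\{1,\dots,m\}$ into at most $p$ nonempty blocks there is exactly one such $\gamma$ satisfying these inequalities whose nonempty level sets $\{i:\pi(i)=k\}$ are exactly the blocks of the partition, and for this $\gamma$ the indices $k$ of the nonempty level sets are exactly $1,\dots,r$, where $r$ is the number of blocks. *)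

theory Defs
  imports Main "HOL-Library.Disjoint_Sets"
begin

definition is_assign :: "nat \<Rightarrow> nat \<Rightarrow> (nat \<Rightarrow> nat \<Rightarrow> nat) \<Rightarrow> bool" where
  "is_assign m p \<gamma> \<longleftrightarrow>
     (\<forall>i\<in>{1..m}. \<forall>k\<in>{1..p}. \<gamma> i k \<in> {0, 1}) \<and>
     (\<forall>i\<in>{1..m}. (\<Sum>k=1..p. \<gamma> i k) = 1)"

definition assign_pi :: "nat \<Rightarrow> (nat \<Rightarrow> nat \<Rightarrow> nat) \<Rightarrow> nat \<Rightarrow> nat" where
  "assign_pi p \<gamma> i = (THE k. k \<in> {1..p} \<and> \<gamma> i k = 1)"

definition ineq_cond :: "nat \<Rightarrow> nat \<Rightarrow> (nat \<Rightarrow> nat \<Rightarrow> nat) \<Rightarrow> bool" where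
  "ineq_cond m p \<gamma> \<longleftrightarrow>
     (\<forall>i\<in>{1..m}. \<forall>k\<in>{1..p}. k \<le> i \<longrightarrow>
        (\<Sum>j=1..<i. \<gamma> j k) \<ge> (\<Sum>l=k+1..p. \<gamma> i l))"

definition rgs_cond :: "nat \<Rightarrow> nat \<Rightarrow> (nat \<Rightarrow> nat \<Rightarrow> nat) \<Rightarrow> bool" where
  "rgs_cond m p \<gamma> \<longleftrightarrow>
     assign_pi p \<gamma> 1 = 1 \<and>
     (\<forall>i\<in>{2..m}. assign_pi p \<gamma> i \<le> 1 + Max (assign_pi p \<gamma> ` {1..<i}))"

definition level_set :: "nat \<Rightarrow> nat \<Rightarrow> (nat \<Rightarrow> nat \<Rightarrow> nat) \<Rightarrow> nat \<Rightarrow> nat set" where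
  "level_set m p \<gamma> k = {i\<in>{1..m}. assign_pi p \<gamma> i = k}"

definition level_blocks :: "nat \<Rightarrow> nat \<Rightarrow> (nat \<Rightarrow> nat \<Rightarrow> nat) \<Rightarrow> nat set set" where
  "level_blocks m p \<gamma> = {level_set m p \<gamma> k | k. k \<in> {1..p} \<and> level_set m p \<gamma> k \<noteq> {}}"

end

theory Submission
  imports Defs
begin


definition Icond :: "nat \<Rightarrow> (nat \<Rightarrow> nat) \<Rightarrow> bool" where
  "Icond m f \<longleftrightarrow> (\<forall>i\<in>{1..m}. \<forall>k. 1 \<le> k \<longrightarrow> k < f i \<longrightarrow> k \<le> i \<longrightarrow> (\<exists>j\<in>{1..<i}. f j = k))"

definition Rcond :: "nat \<Rightarrow> (nat \<Rightarrow> nat) \<Rightarrow> bool" where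
  "Rcond m f \<longleftrightarrow> f 1 = 1 \<and> (\<forall>i\<in>{2..m}. f i \<le> 1 + Max (f ` {1..<i}))"

definition Pre :: "nat \<Rightarrow> (nat \<Rightarrow> nat) \<Rightarrow> bool" where
  "Pre m f \<longleftrightarrow> (\<forall>i\<in>{1..Suc m}. \<exists>c. f ` {1..<i} = {1..c})"

lemma PreD: "Pre m f \<Longrightarrow> 1 \<le> i \<Longrightarrow> i \<le> Suc m \<Longrightarrow> \<exists>c. f ` {1..<i} = {1..c}"
  unfolding Pre_def by auto

lemma img_suc: "1 \<le> i \<Longrightarrow> f ` {1..<Suc i} = insert (f i) (f ` {1..<i})"
proof -
  assume "1 \<le> i"
  then have "{1..<Suc i} = insert i {1..<i}" by auto
  then show ?thesis by simp
qed

lemma pre_step: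
  assumes "f ` {1..<i} = {1..c}" "f ` {1..<Suc i} = {1..c'}" "1 \<le> i"
  shows "f i \<le> Suc c" "1 \<le> f i" "c' \<le> Suc c"
proof -
  have e: "{1..c'} = insert (f i) {1..c}" using assms img_suc[OF assms(3), where f=f] by simp
  have "c' = card (insert (f i) {1..c})" using e by (metis card_atLeastAtMost diff_Suc_1)
  also have "\<dots> \<le> Suc c" by (simp add: card_insert_if)
  finally show "c' \<le> Suc c" .
  have "f i \<in> {1..c'}" using e by auto
  then show "f i \<le> Suc c" "1 \<le> f i" using \<open>c' \<le> Suc c\<close> by auto
qed

lemma new_val:
  assumes "f ` {1..<i} = {1..c}" "f ` {1..<Suc i} = {1..c'}" "1 \<le> i" "f i \<notin> {1..c}"
  shows "f i = Suc c"
proof -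
  have e: "{1..c'} = insert (f i) {1..c}" using assms img_suc[OF assms(3), where f=f] by simp
  have "c' = card (insert (f i) {1..c})" using e by (metis card_atLeastAtMost diff_Suc_1)
  also have "\<dots> = Suc c" using assms(4) by simp
  finally have "c' = Suc c" .
  have "f i \<in> {1..c'}" using e by auto
  then show ?thesis using \<open>c' = Suc c\<close> assms(4) by auto
qed

lemma pre_I: assumes "Pre m f" shows "Icond m f"
  unfolding Icond_def
proof (intro ballI allI impI)
  fix i k assume i: "i \<in> {1..m}" and k: "1 \<le> k" "k < f i" "k \<le> i"
  obtain c where c: "f ` {1..<i} = {1..c}" using PreD[OF assms(1), of i] i by auto
  obtain c' where c': "f ` {1..<Suc i} = {1..c'}" using PreD[OF assms(1), of "Suc i"] i by auto
  have "f i \<le> Suc c" using pre_step(1)[OF c c'] i by auto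
  then have "k \<in> f ` {1..<i}" using c k by auto
  then show "\<exists>j\<in>{1..<i}. f j = k" by auto
qed

lemma pre_R: assumes "Pre m f" "m \<ge> 1" shows "Rcond m f"
  unfolding Rcond_def
proof (intro conjI ballI)
  obtain c where c: "f ` {1..<2} = {1..c}" using PreD[OF assms(1), of 2] assms(2) by auto
  have "{1..<2::nat} = {1}" by auto
  then have "{f 1} = {1..c}" using c by simp
  then show "f 1 = 1" by (metis atLeastAtMost_singleton_iff insert_not_empty atLeastatMost_empty_iff
        singleton_insert_inj_eq)
next
  fix i assume i: "i \<in> {2..m}"
  obtain c where c: "f ` {1..<i} = {1..c}" using PreD[OF assms(1), of i] i by auto
  obtain c' where c': "f ` {1..<Suc i} = {1..c'}" using PreD[OF assms(1), of "Suc i"] i by auto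
  have "f i \<le> Suc c" using pre_step(1)[OF c c'] i by auto
  have "f 1 \<in> f ` {1..<i}" using i by auto
  then have "c \<ge> 1" using c by auto
  have "Max {1..c} = c" using \<open>c \<ge> 1\<close> by (intro Max_eqI) auto
            have "Max {1..c} = c" using \<open>c \<ge> 1\<close> by (intro Max_eqI) auto
  then have "Max (f ` {1..<i}) = c" using c by simp
  then show "f i \<le> 1 + Max (f ` {1..<i})" using \<open>f i \<le> Suc c\<close> by simp
qed

lemma I_pre: assumes "Icond m f" "\<forall>i\<in>{1..m}. f i \<ge> 1" shows "Pre m f"
proof -
  have "\<forall>i. 1 \<le> i \<longrightarrow> i \<le> Suc m \<longrightarrow> (\<exists>c. f ` {1..<i} = {1..c})"
  proof (intro allI)
    fix i show "1 \<le> i \<longrightarrow> i \<le> Suc m \<longrightarrow> (\<exists>c. f ` {1..<i} = {1..c})"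
    proof (induction i)
      case 0 then show ?case by simp
    next
      case (Suc i)
      show ?case
      proof (cases "i = 0")
        case True then show ?thesis by (intro impI exI[of _ 0]) auto
      next
        case False
        show ?thesis
        proof (intro impI)
          assume "Suc i \<le> Suc m"
          then have im: "1 \<le> i" "i \<le> m" using False by auto
          obtain c where c: "f ` {1..<i} = {1..c}" using Suc.IH im by auto
          have "c = card (f ` {1..<i})" using c by simp
          also have "\<dots> \<le> card {1..<i}" by (rule card_image_le) simp
          finally have cle: "c \<le> i - 1" by simp
          have fi1: "f i \<ge> 1" using assms(2) im by auto
          have img: "f ` {1..<Suc i} = insert (f i) {1..c}" using img_suc[OF im(1), where f=f] c by simp
          consider "f i \<le> c" | "f i = Suc c" | "f i > Suc c" by linarith
          then show "\<exists>c. f ` {1..<Suc i} = {1..c}"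
          proof cases
            case 1 then show ?thesis using img fi1 by (intro exI[of _ c]) auto
          next
            case 2 then show ?thesis using img by (intro exI[of _ "Suc c"]) auto
          next
            case 3
            have "\<exists>j\<in>{1..<i}. f j = Suc c" using assms(1) im 3 cle unfolding Icond_def by auto
            then have "Suc c \<in> {1..c}" using c by force
            then show ?thesis by simp
          qed
        qed
      qed
    qed
  qed
  then show ?thesis unfolding Pre_def by auto
qed

lemma R_pre: assumes "Rcond m f" "\<forall>i\<in>{1..m}. f i \<ge> 1" shows "Pre m f"
proof -
  have "\<forall>i. 1 \<le> i \<longrightarrow> i \<le> Suc m \<longrightarrow> (\<exists>c. f ` {1..<i} = {1..c})"
  proof (intro allI)
    fix i show "1 \<le> i \<longrightarrow> i \<le> Suc m \<longrightarrow> (\<exists>c. f ` {1..<i} = {1..c})"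
    proof (induction i)
      case 0 then show ?case by simp
    next
      case (Suc i)
      show ?case
      proof (cases "i = 0")
        case True then show ?thesis by (intro impI exI[of _ 0]) auto
      next
        case False
        show ?thesis
        proof (intro impI)
          assume "Suc i \<le> Suc m"
          then have im: "1 \<le> i" "i \<le> m" using False by auto
          obtain c where c: "f ` {1..<i} = {1..c}" using Suc.IH im by auto
          have fi1: "f i \<ge> 1" using assms(2) im by auto
          have img: "f ` {1..<Suc i} = insert (f i) {1..c}" using img_suc[OF im(1), where f=f] c by simp
          have "f i \<le> Suc c"
          proof (cases "i = 1")
            case True then show ?thesis using assms(1) unfolding Rcond_def by simp
          next
            case False
            then have "f 1 \<in> f ` {1..<i}" using im by auto
            then have "c \<ge> 1" using c by auto
            have "Max {1..c} = c" using \<open>c \<ge> 1\<close> by (intro Max_eqI) auto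
            have "Max {1..c} = c" using \<open>c \<ge> 1\<close> by (intro Max_eqI) auto
  then have "Max (f ` {1..<i}) = c" using c by simp
            then show ?thesis using assms(1) im False unfolding Rcond_def by auto
          qed
          then consider "f i \<le> c" | "f i = Suc c" by linarith
          then show "\<exists>c. f ` {1..<Suc i} = {1..c}"
          proof cases
            case 1 then show ?thesis using img fi1 by (intro exI[of _ c]) auto
          next
            case 2 then show ?thesis using img by (intro exI[of _ "Suc c"]) auto
          qed
        qed
      qed
    qed
  qed
  then show ?thesis unfolding Pre_def by auto
qed

lemma pre_unique:
  assumes "Pre m f" "Pre m g" "\<forall>i\<in>{1..m}. \<forall>j\<in>{1..m}. (f i = f j \<longleftrightarrow> g i = g j)"
  shows "\<forall>i\<in>{1..m}. f i = g i"
proof -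
  have "\<forall>i. i \<le> m \<longrightarrow> (\<forall>j\<in>{1..i}. f j = g j)"
  proof
    fix i show "i \<le> m \<longrightarrow> (\<forall>j\<in>{1..i}. f j = g j)"
    proof (induction i)
      case 0 then show ?case by simp
    next
      case (Suc i)
      show ?case
      proof (intro impI)
        assume sm: "Suc i \<le> m"
        let ?n = "Suc i"
        have IH: "\<forall>j\<in>{1..<?n}. f j = g j" using Suc.IH sm by auto
        have eqimg: "f ` {1..<?n} = g ` {1..<?n}" using IH by (intro image_cong) auto
        obtain c where c: "f ` {1..<?n} = {1..c}" using PreD[OF assms(1), of ?n] sm by auto
        obtain c' where c': "f ` {1..<Suc ?n} = {1..c'}" using PreD[OF assms(1), of "Suc ?n"] sm by auto
        obtain d' where d': "g ` {1..<Suc ?n} = {1..d'}" using PreD[OF assms(2), of "Suc ?n"] sm by auto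
        have gc: "g ` {1..<?n} = {1..c}" using c eqimg by simp
        have "f ?n = g ?n"
        proof (cases "\<exists>j\<in>{1..<?n}. f j = f ?n")
          case True
          then obtain j where j: "j \<in> {1..<?n}" "f j = f ?n" by auto
          then have "g j = g ?n" using assms(3) sm by auto
          then show ?thesis using j IH by auto
        next
          case False
          then have fn: "f ?n \<notin> {1..c}" unfolding c[symmetric] by (auto simp del: One_nat_def)
          have "\<not> (\<exists>j\<in>{1..<?n}. g j = g ?n)"
          proof
            assume "\<exists>j\<in>{1..<?n}. g j = g ?n"
            then obtain j where j: "j \<in> {1..<?n}" "g j = g ?n" by auto
            then have "f j = f ?n" using assms(3) sm by auto
            then show False using False j by auto
          qed
          then have gn: "g ?n \<notin> {1..c}" unfolding gc[symmetric] by (auto simp del: One_nat_def)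
          show ?thesis using new_val[OF c c' _ fn] new_val[OF gc d' _ gn] by simp
        qed
        then show "\<forall>j\<in>{1..?n}. f j = g j" using IH by (auto simp: le_Suc_eq)
      qed
    qed
  qed
  then show ?thesis by auto
qed



lemma assign_props:
  assumes "is_assign m p \<gamma>" "i \<in> {1..m}"
  shows "assign_pi p \<gamma> i \<in> {1..p}" "\<forall>k\<in>{1..p}. \<gamma> i k = (if k = assign_pi p \<gamma> i then 1 else 0)"
proof -
  have vals: "\<forall>k\<in>{1..p}. \<gamma> i k \<in> {0,1}" and s: "(\<Sum>k=1..p. \<gamma> i k) = 1"
    using assms unfolding is_assign_def by auto
  have "\<exists>k\<in>{1..p}. \<gamma> i k = 1"
  proof (rule ccontr)
    assume "\<not> (\<exists>k\<in>{1..p}. \<gamma> i k = 1)"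
    then have "\<forall>k\<in>{1..p}. \<gamma> i k = 0" using vals by blast
    then have "(\<Sum>k=1..p. \<gamma> i k) = 0" by simp
    then show False using s by simp
  qed
  then obtain k where k: "k \<in> {1..p}" "\<gamma> i k = 1" by blast
  have uniq: "k' = k" if k': "k' \<in> {1..p}" "\<gamma> i k' = 1" for k'
  proof (rule ccontr)
    assume ne: "k' \<noteq> k"
    have a: "(\<Sum>k=1..p. \<gamma> i k) = \<gamma> i k + (\<Sum>l\<in>{1..p} - {k}. \<gamma> i l)"
      using k(1) by (simp add: sum.remove)
    have "k' \<in> {1..p} - {k}" using k' ne by simp
    then have b: "(\<Sum>l\<in>{1..p} - {k}. \<gamma> i l) \<ge> \<gamma> i k'"
      by (intro member_le_sum) auto
    show False using a b s k(2) k'(2) by linarith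
  qed
  have pi: "assign_pi p \<gamma> i = k" unfolding assign_pi_def
  proof (rule the_equality)
    show "k \<in> {1..p} \<and> \<gamma> i k = 1" using k by simp
  next
    fix x assume "x \<in> {1..p} \<and> \<gamma> i x = 1" then show "x = k" using uniq by blast
  qed
  show "assign_pi p \<gamma> i \<in> {1..p}" using pi k by simp
  show "\<forall>k'\<in>{1..p}. \<gamma> i k' = (if k' = assign_pi p \<gamma> i then 1 else 0)"
  proof
    fix k' assume k': "k' \<in> {1..p}"
    show "\<gamma> i k' = (if k' = assign_pi p \<gamma> i then 1 else 0)"
    proof (cases "k' = k")
      case True then show ?thesis using pi k by simp
    next
      case False
      then have "\<gamma> i k' \<noteq> 1" using uniq k' by blast
      then have "\<gamma> i k' = 0" using vals k' by blast
      then show ?thesis using pi False by simp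
    qed
  qed
qed
lemma ineq_iff:
  assumes "is_assign m p \<gamma>"
  shows "ineq_cond m p \<gamma> \<longleftrightarrow> Icond m (assign_pi p \<gamma>)"
proof -
  let ?f = "assign_pi p \<gamma>"
  have rhs: "(\<Sum>l=k+1..p. \<gamma> i l) = (if k < ?f i then 1 else 0)"
    if "i \<in> {1..m}" for i k
  proof -
    have "(\<Sum>l=k+1..p. \<gamma> i l) = (\<Sum>l=k+1..p. if l = ?f i then 1 else 0)"
    proof (rule sum.cong[OF refl])
      fix l assume l: "l \<in> {k+1..p}"
      then have "l \<in> {1..p}" by simp
      then show "\<gamma> i l = (if l = ?f i then 1 else 0)" using assign_props(2)[OF assms that] by blast
    qed
    also have "\<dots> = (if ?f i \<in> {k+1..p} then 1 else 0)" by (simp add: sum.delta')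
    finally show ?thesis using assign_props(1)[OF assms that] by auto
  qed
  have lhs: "(\<Sum>j=1..<i. \<gamma> j k) \<ge> 1 \<longleftrightarrow> (\<exists>j\<in>{1..<i}. ?f j = k)"
    if "i \<in> {1..m}" "k \<in> {1..p}" for i k
  proof -
    have "(\<Sum>j=1..<i. \<gamma> j k) = (\<Sum>j=1..<i. if ?f j = k then 1 else 0)"
    proof (rule sum.cong[OF refl])
      fix j assume "j \<in> {1..<i}"
      then have j: "j \<in> {1..m}" using that(1) by simp
      have "\<gamma> j k = (if k = ?f j then 1 else 0)" using assign_props(2)[OF assms j] that(2) by blast
      then show "\<gamma> j k = (if ?f j = k then 1 else 0)" by metis
    qed
    moreover have "(\<Sum>j=1..<i. if ?f j = k then 1 else 0::nat) \<ge> 1 \<longleftrightarrow> (\<exists>j\<in>{1..<i}. ?f j = k)"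
    proof -
      have "(\<Sum>j=1..<i. if ?f j = k then 1 else 0::nat) = 0 \<longleftrightarrow> \<not>(\<exists>j\<in>{1..<i}. ?f j = k)"
        by (subst sum_eq_0_iff) auto
      then show ?thesis by linarith
    qed
    ultimately show ?thesis by simp
  qed
  show ?thesis
  proof
    assume h: "ineq_cond m p \<gamma>"
    show "Icond m ?f" unfolding Icond_def
    proof (intro ballI allI impI)
      fix i k assume i: "i \<in> {1..m}" and k: "1 \<le> k" "k < ?f i" "k \<le> i"
      have kp: "k \<in> {1..p}" using k assign_props(1)[OF assms i] by auto
      have "(\<Sum>j=1..<i. \<gamma> j k) \<ge> (\<Sum>l=k+1..p. \<gamma> i l)" using h i kp k unfolding ineq_cond_def by auto
      then have "(\<Sum>j=1..<i. \<gamma> j k) \<ge> 1" using rhs[OF i, of k] k by simp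
      then show "\<exists>j\<in>{1..<i}. ?f j = k" using lhs[OF i kp] by simp
    qed
  next
    assume h: "Icond m ?f"
    show "ineq_cond m p \<gamma>" unfolding ineq_cond_def
    proof (intro ballI impI)
      fix i k assume i: "i \<in> {1..m}" and kp: "k \<in> {1..p}" and ki: "k \<le> i"
      show "(\<Sum>j=1..<i. \<gamma> j k) \<ge> (\<Sum>l=k+1..p. \<gamma> i l)"
      proof (cases "k < ?f i")
        case True
        then have "\<exists>j\<in>{1..<i}. ?f j = k" using h i kp ki unfolding Icond_def by auto
        then show ?thesis using lhs[OF i kp] rhs[OF i, of k] True by simp
      next
        case False
        then show ?thesis using rhs[OF i, of k] by simp
      qed
    qed
  qed
qed



lemma part1:
  assumes "m \<ge> 1" "is_assign m p \<gamma>"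
  shows "ineq_cond m p \<gamma> \<longleftrightarrow> rgs_cond m p \<gamma>"
proof -
  have ge: "\<forall>i\<in>{1..m}. assign_pi p \<gamma> i \<ge> 1" using assign_props(1)[OF assms(2)] by auto
  have r: "rgs_cond m p \<gamma> \<longleftrightarrow> Rcond m (assign_pi p \<gamma>)" unfolding rgs_cond_def Rcond_def by simp
  show ?thesis unfolding ineq_iff[OF assms(2)] r
    using I_pre[OF _ ge] R_pre[OF _ ge] pre_I pre_R[OF _ assms(1)] by blast
qed

definition blk :: "nat set set \<Rightarrow> nat \<Rightarrow> nat set" where
  "blk P i = (THE B. B \<in> P \<and> i \<in> B)"
definition rk :: "nat set set \<Rightarrow> nat \<Rightarrow> nat" where
  "rk P x = card {y \<in> Min ` P. y \<le> x}"
definition lab :: "nat set set \<Rightarrow> nat \<Rightarrow> nat" where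
  "lab P i = rk P (Min (blk P i))"

locale partctx =
  fixes m :: nat and P :: "nat set set"
  assumes part: "partition_on {1..m} P"
begin

lemma union: "\<Union>P = {1..m}" using part by (simp add: partition_on_def)
lemma nonempty: "B \<in> P \<Longrightarrow> B \<noteq> {}" using part by (auto simp: partition_on_def)
lemma sub: "B \<in> P \<Longrightarrow> B \<subseteq> {1..m}" using union by auto
lemma finB: "B \<in> P \<Longrightarrow> finite B" using sub finite_subset by blast
lemma finP: "finite P" using union by (metis finite_UnionD finite_atLeastAtMost)
lemma disj: "B \<in> P \<Longrightarrow> B' \<in> P \<Longrightarrow> x \<in> B \<Longrightarrow> x \<in> B' \<Longrightarrow> B = B'"
  using partition_onD2[OF part] disjointD by blast

lemma blk_eq: "B \<in> P \<Longrightarrow> i \<in> B \<Longrightarrow> blk P i = B"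
  unfolding blk_def by (rule the_equality) (auto dest: disj)

lemma blk_in: assumes "i \<in> {1..m}" shows "blk P i \<in> P" "i \<in> blk P i"
proof -
  have "i \<in> \<Union>P" using union assms by simp
  then obtain B where "B \<in> P" "i \<in> B" by blast
  then show "blk P i \<in> P" "i \<in> blk P i" using blk_eq by auto
qed

lemma Min_in: "B \<in> P \<Longrightarrow> Min B \<in> B" using finB nonempty by simp

lemma Min_inj: "B \<in> P \<Longrightarrow> B' \<in> P \<Longrightarrow> Min B = Min B' \<Longrightarrow> B = B'"
  using Min_in disj by metis

lemma card_mins: "card (Min ` P) = card P"
  by (metis Min_inj inj_onI card_image)

lemma finM: "finite (Min ` P)" using finP by simp

lemma rk_mono: "x \<le> y \<Longrightarrow> rk P x \<le> rk P y"
  unfolding rk_def using finM by (intro card_mono) auto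

lemma rk_strict: assumes "x \<in> Min ` P" "y \<in> Min ` P" "x < y" shows "rk P x < rk P y"
  unfolding rk_def
proof (rule psubset_card_mono)
  show "finite {z \<in> Min ` P. z \<le> y}" using finM by simp
  have a: "{z \<in> Min ` P. z \<le> x} \<subseteq> {z \<in> Min ` P. z \<le> y}" using assms by auto
  have b: "y \<in> {z \<in> Min ` P. z \<le> y}" "y \<notin> {z \<in> Min ` P. z \<le> x}" using assms by auto
  show "{z \<in> Min ` P. z \<le> x} \<subset> {z \<in> Min ` P. z \<le> y}" using a b by blast
qed

lemma rk_range: assumes "x \<in> Min ` P" shows "rk P x \<in> {1..card P}"
proof -
  have "x \<in> {y\<in>Min ` P. y \<le> x}" using assms by simp
  then have "card {y\<in>Min ` P. y \<le> x} > 0" using finM by (auto simp: card_gt_0_iff)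
  then have "rk P x \<ge> 1" unfolding rk_def by simp
  moreover have "rk P x \<le> card (Min ` P)" unfolding rk_def using finM by (intro card_mono) auto
  ultimately show ?thesis using card_mins by simp
qed

lemma rk_inj: "inj_on (rk P) (Min ` P)"
proof (rule inj_onI)
  fix x y assume "x \<in> Min ` P" "y \<in> Min ` P" "rk P x = rk P y"
  then show "x = y" using rk_strict by (metis less_irrefl linorder_neqE_nat)
qed

lemma rk_onto: "rk P ` (Min ` P) = {1..card P}"
proof (rule card_subset_eq)
  show "finite {1..card P}" by simp
  show "rk P ` Min ` P \<subseteq> {1..card P}" using rk_range by auto
  show "card (rk P ` Min ` P) = card {1..card P}"
    using card_image[OF rk_inj] card_mins by simp
qed

lemma rk_less: assumes "x \<in> Min ` P" "y \<in> Min ` P" "rk P y < rk P x" shows "y < x"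
  using rk_mono assms by (meson leD le_less_linear)

lemma lab_range: "i \<in> {1..m} \<Longrightarrow> lab P i \<in> {1..card P}"
  unfolding lab_def using blk_in rk_range by auto

lemma lab_eq: assumes "i \<in> {1..m}" "j \<in> {1..m}" shows "lab P i = lab P j \<longleftrightarrow> blk P i = blk P j"
proof
  assume "lab P i = lab P j"
  then have "Min (blk P i) = Min (blk P j)" unfolding lab_def
    using rk_inj blk_in assms by (auto dest: inj_onD)
  then show "blk P i = blk P j" using Min_inj blk_in assms by blast
qed (simp add: lab_def)

lemma lab_Min: assumes "B \<in> P" shows "lab P (Min B) = rk P (Min B)"
  unfolding lab_def using blk_eq[OF assms Min_in[OF assms]] by simp

lemma lab_I: "Icond m (lab P)"
  unfolding Icond_def
proof (intro ballI allI impI)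
  fix i k assume i: "i \<in> {1..m}" and k: "1 \<le> k" "k < lab P i" "k \<le> i"
  let ?x = "Min (blk P i)"
  have xM: "?x \<in> Min ` P" using blk_in[OF i] by auto
  have xi: "?x \<le> i" using Min_le[OF finB[OF blk_in(1)[OF i]] blk_in(2)[OF i]] .
  have "k \<in> {1..card P}" using k lab_range[OF i] by auto
  then have "k \<in> rk P ` Min ` P" using rk_onto by simp
  then obtain y where yM: "y \<in> Min ` P" and ky: "rk P y = k" by blast
  then obtain B where B: "B \<in> P" "y = Min B" by blast
  have "y < ?x" using rk_less[OF xM yM] ky k unfolding lab_def by simp
  moreover have "y \<in> {1..m}" using B Min_in sub by blast
  ultimately have "y \<in> {1..<i}" using xi by auto
  moreover have "lab P y = k" using lab_Min[OF B(1)] B ky by simp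
  ultimately show "\<exists>j\<in>{1..<i}. lab P j = k" by blast
qed

lemma level_lab: assumes "i \<in> {1..m}" shows "{i'\<in>{1..m}. lab P i' = lab P i} = blk P i"
proof
  show "{i'\<in>{1..m}. lab P i' = lab P i} \<subseteq> blk P i"
  proof
    fix x assume "x \<in> {i'\<in>{1..m}. lab P i' = lab P i}"
    then have x: "x \<in> {1..m}" "lab P x = lab P i" by auto
    then have "blk P x = blk P i" using lab_eq[OF x(1) assms] by simp
    then show "x \<in> blk P i" using blk_in(2)[OF x(1)] by simp
  qed
  show "blk P i \<subseteq> {i'\<in>{1..m}. lab P i' = lab P i}"
  proof
    fix i' assume h: "i' \<in> blk P i"
    then have i': "i' \<in> {1..m}" using sub blk_in[OF assms] by blast
    have "blk P i' = blk P i" using blk_eq[OF blk_in(1)[OF assms] h] .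
    then show "i' \<in> {i'\<in>{1..m}. lab P i' = lab P i}" using lab_eq[OF i' assms] i' by simp
  qed
qed

end



lemma Icond_cong: assumes "\<forall>i\<in>{1..m}. f i = g i" shows "Icond m f = Icond m g"
proof -
  have "\<forall>i\<in>{1..m}. \<forall>j\<in>{1..<i}. f j = g j" using assms by auto
  then show ?thesis using assms unfolding Icond_def by (metis (no_types, lifting))
qed

context partctx
begin

definition g0 :: "nat \<Rightarrow> nat \<Rightarrow> nat" where "g0 i k = (if k = lab P i then 1 else 0)"

lemma part2:
  assumes cp: "card P \<le> p"
  shows "\<exists>\<gamma>. is_assign m p \<gamma> \<and> ineq_cond m p \<gamma> \<and> level_blocks m p \<gamma> = P \<and>
                 {k\<in>{1..p}. level_set m p \<gamma> k \<noteq> {}} = {1..card P} \<and>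
                 (\<forall>\<gamma>'. is_assign m p \<gamma>' \<and> ineq_cond m p \<gamma>' \<and> level_blocks m p \<gamma>' = P \<longrightarrow>
                        (\<forall>i\<in>{1..m}. \<forall>k\<in>{1..p}. \<gamma>' i k = \<gamma> i k))"
proof (intro exI conjI)
  have labp: "lab P i \<in> {1..p}" if "i \<in> {1..m}" for i using lab_range[OF that] cp by auto
  have pi0: "assign_pi p g0 i = lab P i" if i: "i \<in> {1..m}" for i
    unfolding assign_pi_def
  proof (rule the_equality)
    show "lab P i \<in> {1..p} \<and> g0 i (lab P i) = 1" using labp[OF i] by (simp add: g0_def)
  next
    fix x assume "x \<in> {1..p} \<and> g0 i x = 1" then show "x = lab P i" by (simp add: g0_def split: if_splits)
  qed
  show ia: "is_assign m p g0" unfolding is_assign_def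
  proof (intro conjI ballI)
    fix i k show "g0 i k \<in> {0, 1}" by (simp add: g0_def)
  next
    fix i assume i: "i \<in> {1..m}"
    have "(\<Sum>k=1..p. g0 i k) = (\<Sum>k=1..p. if k = lab P i then 1 else 0)" by (simp add: g0_def)
    also have "\<dots> = 1" using labp[OF i] by (simp add: sum.delta)
    finally show "(\<Sum>k=1..p. g0 i k) = 1" .
  qed
  have Ic: "Icond m (assign_pi p g0)" using lab_I Icond_cong[of m "assign_pi p g0" "lab P"] pi0 by auto
  show ineq: "ineq_cond m p g0" using ineq_iff[OF ia] Ic by simp
  have ls: "level_set m p g0 k = {i\<in>{1..m}. lab P i = k}" for k
    unfolding level_set_def using pi0 by auto
  show "level_blocks m p g0 = P"
  proof
    show "level_blocks m p g0 \<subseteq> P"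
    proof
      fix L assume "L \<in> level_blocks m p g0"
      then obtain k where k: "k \<in> {1..p}" "L = level_set m p g0 k" "L \<noteq> {}" unfolding level_blocks_def by blast
      then obtain i where i: "i \<in> L" by blast
      then have i1: "i \<in> {1..m}" "lab P i = k" using k ls by auto
      have "L = {i'\<in>{1..m}. lab P i' = lab P i}" using k ls i1 by simp
      also have "\<dots> = blk P i" using level_lab[OF i1(1)] .
      finally show "L \<in> P" using blk_in[OF i1(1)] by simp
    qed
    show "P \<subseteq> level_blocks m p g0"
    proof
      fix B assume B: "B \<in> P"
      then obtain i where i: "i \<in> B" using nonempty by blast
      then have i1: "i \<in> {1..m}" using sub B by blast
      have bi: "blk P i = B" using blk_eq[OF B i] .
      have "level_set m p g0 (lab P i) = B" using ls level_lab[OF i1] bi by simp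
      then show "B \<in> level_blocks m p g0" unfolding level_blocks_def using labp[OF i1] nonempty[OF B] by blast
    qed
  qed
  show "{k\<in>{1..p}. level_set m p g0 k \<noteq> {}} = {1..card P}"
  proof
    show "{k\<in>{1..p}. level_set m p g0 k \<noteq> {}} \<subseteq> {1..card P}"
      using ls lab_range by fastforce
    show "{1..card P} \<subseteq> {k\<in>{1..p}. level_set m p g0 k \<noteq> {}}"
    proof
      fix k assume k: "k \<in> {1..card P}"
      then have "k \<in> rk P ` Min ` P" using rk_onto by simp
      then obtain y where yM: "y \<in> Min ` P" and ky: "rk P y = k" by blast
      then obtain B where B: "B \<in> P" "y = Min B" by blast
      have "y \<in> {1..m}" using B Min_in sub by blast
      moreover have "lab P y = k" using lab_Min[OF B(1)] B ky by simp
      ultimately have "y \<in> level_set m p g0 k" using ls by simp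
      then show "k \<in> {k\<in>{1..p}. level_set m p g0 k \<noteq> {}}" using k cp by auto
    qed
  qed
  show "\<forall>\<gamma>'. is_assign m p \<gamma>' \<and> ineq_cond m p \<gamma>' \<and> level_blocks m p \<gamma>' = P \<longrightarrow>
                        (\<forall>i\<in>{1..m}. \<forall>k\<in>{1..p}. \<gamma>' i k = g0 i k)"
  proof (intro allI impI ballI)
    fix \<gamma>' i k assume h: "is_assign m p \<gamma>' \<and> ineq_cond m p \<gamma>' \<and> level_blocks m p \<gamma>' = P"
      and i: "i \<in> {1..m}" and k: "k \<in> {1..p}"
    let ?g = "assign_pi p \<gamma>'"
    have ia': "is_assign m p \<gamma>'" using h by simp
    have ge': "\<forall>i\<in>{1..m}. ?g i \<ge> 1" using assign_props(1)[OF ia'] by auto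
    have pg: "Pre m ?g" using I_pre[OF _ ge'] ineq_iff[OF ia'] h by blast
    have ge0: "\<forall>i\<in>{1..m}. assign_pi p g0 i \<ge> 1" using assign_props(1)[OF ia] by auto
    have p0: "Pre m (assign_pi p g0)" using I_pre[OF Ic ge0] .
    have lvl: "level_set m p \<gamma>' (?g a) = blk P a" if a: "a \<in> {1..m}" for a
    proof -
      have "a \<in> level_set m p \<gamma>' (?g a)" unfolding level_set_def using a by simp
      moreover have "?g a \<in> {1..p}" using assign_props(1)[OF ia' a] .
      ultimately have "level_set m p \<gamma>' (?g a) \<in> level_blocks m p \<gamma>'" unfolding level_blocks_def by blast
      then have "level_set m p \<gamma>' (?g a) \<in> P" using h by simp
      then show ?thesis using blk_eq \<open>a \<in> level_set m p \<gamma>' (?g a)\<close> by simp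
    qed
    have rel: "\<forall>a\<in>{1..m}. \<forall>b\<in>{1..m}. (assign_pi p g0 a = assign_pi p g0 b \<longleftrightarrow> ?g a = ?g b)"
    proof (intro ballI)
      fix a b assume a: "a \<in> {1..m}" and b: "b \<in> {1..m}"
      have "assign_pi p g0 a = assign_pi p g0 b \<longleftrightarrow> blk P a = blk P b"
        using pi0[OF a] pi0[OF b] lab_eq[OF a b] by simp
      also have "\<dots> \<longleftrightarrow> ?g a = ?g b"
      proof
        assume "blk P a = blk P b"
        then have "b \<in> level_set m p \<gamma>' (?g a)" using lvl[OF a] blk_in(2)[OF b] by simp
        then show "?g a = ?g b" unfolding level_set_def by simp
      next
        assume "?g a = ?g b" then show "blk P a = blk P b" using lvl[OF a] lvl[OF b] by simp
      qed
      finally show "assign_pi p g0 a = assign_pi p g0 b \<longleftrightarrow> ?g a = ?g b" .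
    qed
    have "assign_pi p g0 i = ?g i" using pre_unique[OF p0 pg rel] i by blast
    then show "\<gamma>' i k = g0 i k"
      using assign_props(2)[OF ia' i] assign_props(2)[OF ia i] k by simp
  qed
qed

end

theorem mainTheorem4:
  fixes m p :: nat
  assumes "m \<ge> 1" and "p \<ge> 1"
  shows "(\<forall>\<gamma>. is_assign m p \<gamma> \<longrightarrow> (ineq_cond m p \<gamma> \<longleftrightarrow> rgs_cond m p \<gamma>)) \<and>
         (\<forall>P. partition_on {1..m} P \<and> card P \<le> p \<longrightarrow>
            (\<exists>\<gamma>. is_assign m p \<gamma> \<and> ineq_cond m p \<gamma> \<and> level_blocks m p \<gamma> = P \<and>
                 {k\<in>{1..p}. level_set m p \<gamma> k \<noteq> {}} = {1..card P} \<and>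
                 (\<forall>\<gamma>'. is_assign m p \<gamma>' \<and> ineq_cond m p \<gamma>' \<and> level_blocks m p \<gamma>' = P \<longrightarrow>
                        (\<forall>i\<in>{1..m}. \<forall>k\<in>{1..p}. \<gamma>' i k = \<gamma> i k))))"
proof (intro conjI allI impI)
  fix \<gamma> assume "is_assign m p \<gamma>"
  then show "ineq_cond m p \<gamma> \<longleftrightarrow> rgs_cond m p \<gamma>" using part1 assms(1) by blast
next
  fix P assume h: "partition_on {1..m} P \<and> card P \<le> p"
  interpret partctx m P using h by unfold_locales simp
  show "\<exists>\<gamma>. is_assign m p \<gamma> \<and> ineq_cond m p \<gamma> \<and> level_blocks m p \<gamma> = P \<and>
                 {k\<in>{1..p}. level_set m p \<gamma> k \<noteq> {}} = {1..card P} \<and>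
                 (\<forall>\<gamma>'. is_assign m p \<gamma>' \<and> ineq_cond m p \<gamma>' \<and> level_blocks m p \<gamma>' = P \<longrightarrow>
                        (\<forall>i\<in>{1..m}. \<forall>k\<in>{1..p}. \<gamma>' i k = \<gamma> i k))"
    using part2 h by blast
qed


end
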